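(* Let $\ell\ge1$ and $n\ge2$ be integers and $N=n^\ell$. The EBS design of order $\ell$ on $N$ nodes guarantees throughput $\frac{1}{2\ell}$ and has maximum latency at most $2\ell(n-1)$. In particular, if $r\le\frac12$ is such that $\ell=\frac1{2r}$ is an integer and $N^{1/\ell}$ is an integer, the EBS design of order $\ell$ on $N$ nodes guarantees throughput $r$ and has maximum latency at most $\frac1r\left(N^{2r}-1\right)$.
   Context: General definitions. A connection schedule of size $N$ and period $T\ge1$ is a sequence of permutations $\pi_0,\dots,\pi_{T-1}$ of the node set; write $\pi_t=\pi_{t\bmod T}$ for $t\in\mathbb Z$. Its virtual topology $G$ is the directed graph on (nodes)$\times\mathbb Z$ with virtual edges $(i,t)\to(i,t+1)$ and physical edges $(i,t)\to(\pi_t(i),t+1)$. The latency of a path in $G$ is its number of edges; $\mathcal P(a,b,t)$ is the set of paths from $(a,t)$ to some $(b,t')$. A flow is $f:\mathcal P\to[0,\infty)$ on the set $\mathcal P$ of all paths, with load $F(f,e)=\sum_{P\ni e}f(P)$; it is feasible if $F(f,e)\le1$ for all physical edges $e$. An oblivious routing scheme assigns to each $(a,b,t)$ a flow $R_{a,b,t}$ supported on $\mathcal P(a,b,t)$ of total value 1, periodic in $t$ with period $T$ (shifting paths by $T$). Maximum latency is the largest latency of a path with positive weight in some $R_{a,b,t}$. A demand function $D$ gives for each $t\in\mathbb Z$ a nonnegative $N\times N$ matrix $D(t)$; it requests throughput $\sup_t$ of the maximum row or column sum of $D(t)$. The scheme guarantees throughput $r$ if $f(R,D)=\sum_{a,b,t}D(t,a,b)R_{a,b,t}$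 is feasible for every $D$ requesting throughput at most $r$. EBS (Elementary Basis Scheme) of order $\ell$: nodes are identified with $(\mathbb Z/n)^\ell$, $N=n^\ell$; $\mathbf e_p$ ($0\le p<\ell$) is the standard basis vector. The period is $T=\ell(n-1)$; for $0\le p<\ell$ and $1\le s\le n-1$, $\pi_{(n-1)p+s-1}(\mathbf i)=\mathbf i+s\mathbf e_p$. The semi-path from $(a,t)$ to $b$ is built greedily: at the current vertex $(x,t')$, stop if $x=b$; otherwise write $t'\bmod T=(n-1)p+s-1$ and, if $(b-x)_p=s$ in $\mathbb Z/n$, traverse the physical edge to $(x+s\mathbf e_p,t'+1)$, else the virtual edge to $(x,t'+1)$. For $c\in[N]$, the path from $(a,t)$ to $b$ via $c$ is: the semi-path from $(a,t)$ to $c$, then virtual edges up to $(c,t+T)$, then the semi-path from $(c,t+T)$ to $b$. The EBS routing scheme sets $R_{a,b,t}$ to give weight $1/N$ to the path via $c$ for each of the $N$ nodes $c$, and weight $0$ to all other paths. *)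

theory Defs
  imports "HOL-Analysis.Analysis"
begin

text \<open>A connection schedule on node set V is given by a function sch, where sch t is the
permutation used at time t (already extended periodically to all integers t).
A path in the virtual topology is represented as (start node, start time, list of edge
choices), where choice True = physical edge (i,t) -> (sch t i, t+1) and
False = virtual edge (i,t) -> (i,t+1).
A physical edge is identified by its source vertex (i,s), since each vertex has
exactly one outgoing physical edge.\<close>

type_synonym 'v path = "'v \<times> int \<times> bool list"

fun walk :: "(int \<Rightarrow> 'v \<Rightarrow> 'v) \<Rightarrow> 'v \<Rightarrow> int \<Rightarrow> bool list \<Rightarrow> 'v" where
  "walk sch x t [] = x"
| "walk sch x t (c # cs) = walk sch (if c then sch t x else x) (t + 1) cs"

definition latency :: "'v path \<Rightarrow> nat" where
  "latency P = length (snd (snd P))"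

definition uses_phys :: "(int \<Rightarrow> 'v \<Rightarrow> 'v) \<Rightarrow> 'v path \<Rightarrow> 'v \<times> int \<Rightarrow> bool" where
  "uses_phys sch P e = (case P of (a, t, cs) \<Rightarrow>
     (\<exists>k < length cs. cs ! k \<and> walk sch a t (take k cs) = fst e \<and> t + int k = snd e))"

definition route_paths :: "(int \<Rightarrow> 'v \<Rightarrow> 'v) \<Rightarrow> 'v \<Rightarrow> 'v \<Rightarrow> int \<Rightarrow> 'v path set" where
  "route_paths sch a b t = {(x, s, cs). x = a \<and> s = t \<and> walk sch a t cs = b}"

definition connection_schedule :: "'v set \<Rightarrow> nat \<Rightarrow> (int \<Rightarrow> 'v \<Rightarrow> 'v) \<Rightarrow> bool" where
  "connection_schedule V T sch \<longleftrightarrow> T \<ge> 1 \<and> (\<forall>t. bij_betw (sch t) V V)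
     \<and> (\<forall>t. sch (t + int T) = sch t)"

definition oblivious_routing_scheme ::
  "'v set \<Rightarrow> nat \<Rightarrow> (int \<Rightarrow> 'v \<Rightarrow> 'v) \<Rightarrow> ('v \<Rightarrow> 'v \<Rightarrow> int \<Rightarrow> 'v path \<Rightarrow> real) \<Rightarrow> bool" where
  "oblivious_routing_scheme V T sch R \<longleftrightarrow> connection_schedule V T sch \<and>
     (\<forall>a\<in>V. \<forall>b\<in>V. \<forall>t.
        (\<forall>P. R a b t P \<ge> 0)
      \<and> (\<forall>P. R a b t P \<noteq> 0 \<longrightarrow> P \<in> route_paths sch a b t)
      \<and> (\<Sum>\<^sub>\<infinity>P\<in>route_paths sch a b t. ennreal (R a b t P)) = 1
      \<and> (\<forall>x s cs. R a b (t + int T) (x, s + int T, cs) = R a b t (x, s, cs)))"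

definition max_latency_le ::
  "'v set \<Rightarrow> ('v \<Rightarrow> 'v \<Rightarrow> int \<Rightarrow> 'v path \<Rightarrow> real) \<Rightarrow> real \<Rightarrow> bool" where
  "max_latency_le V R L \<longleftrightarrow>
     (\<forall>a\<in>V. \<forall>b\<in>V. \<forall>t P. R a b t P > 0 \<longrightarrow> real (latency P) \<le> L)"

definition requests_at_most :: "'v set \<Rightarrow> (int \<Rightarrow> 'v \<Rightarrow> 'v \<Rightarrow> real) \<Rightarrow> real \<Rightarrow> bool" where
  "requests_at_most V D r \<longleftrightarrow>
     (\<forall>t. \<forall>a\<in>V. \<forall>b\<in>V. D t a b \<ge> 0)
   \<and> (\<forall>t. \<forall>a\<in>V. (\<Sum>b\<in>V. D t a b) \<le> r)
   \<and> (\<forall>t. \<forall>b\<in>V. (\<Sum>a\<in>V. D t a b) \<le> r)"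

definition flow_of :: "'v set \<Rightarrow> ('v \<Rightarrow> 'v \<Rightarrow> int \<Rightarrow> 'v path \<Rightarrow> real)
    \<Rightarrow> (int \<Rightarrow> 'v \<Rightarrow> 'v \<Rightarrow> real) \<Rightarrow> 'v path \<Rightarrow> ennreal" where
  "flow_of V R D P = (\<Sum>\<^sub>\<infinity>(a, b, t)\<in>V \<times> V \<times> (UNIV :: int set).
      ennreal (D t a b) * ennreal (R a b t P))"

definition load :: "'v set \<Rightarrow> (int \<Rightarrow> 'v \<Rightarrow> 'v) \<Rightarrow> ('v path \<Rightarrow> ennreal) \<Rightarrow> 'v \<times> int \<Rightarrow> ennreal" where
  "load V sch f e = (\<Sum>\<^sub>\<infinity>P\<in>{P. fst P \<in> V \<and> uses_phys sch P e}. f P)"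

definition feasible :: "'v set \<Rightarrow> (int \<Rightarrow> 'v \<Rightarrow> 'v) \<Rightarrow> ('v path \<Rightarrow> ennreal) \<Rightarrow> bool" where
  "feasible V sch f \<longleftrightarrow> (\<forall>i\<in>V. \<forall>s. load V sch f (i, s) \<le> 1)"

definition guarantees_throughput :: "'v set \<Rightarrow> (int \<Rightarrow> 'v \<Rightarrow> 'v)
    \<Rightarrow> ('v \<Rightarrow> 'v \<Rightarrow> int \<Rightarrow> 'v path \<Rightarrow> real) \<Rightarrow> real \<Rightarrow> bool" where
  "guarantees_throughput V sch R r \<longleftrightarrow>
     (\<forall>D. requests_at_most V D r \<longrightarrow> feasible V sch (flow_of V R D))"

text \<open>Nodes (Z/n)^l are represented as functions x :: nat => nat with x p < n for p < l
and x p = 0 for p >= l.\<close>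

definition ebs_nodes :: "nat \<Rightarrow> nat \<Rightarrow> (nat \<Rightarrow> nat) set" where
  "ebs_nodes l n = {x. (\<forall>p<l. x p < n) \<and> (\<forall>p\<ge>l. x p = 0)}"

definition ebs_period :: "nat \<Rightarrow> nat \<Rightarrow> nat" where
  "ebs_period l n = l * (n - 1)"

text \<open>For time t, write t mod T = (n-1) p + s - 1; returns (p, s).\<close>
definition ebs_ps :: "nat \<Rightarrow> nat \<Rightarrow> int \<Rightarrow> nat \<times> nat" where
  "ebs_ps l n t = (let k = nat (t mod int (ebs_period l n)) in (k div (n - 1), k mod (n - 1) + 1))"

definition ebs_add :: "nat \<Rightarrow> (nat \<Rightarrow> nat) \<Rightarrow> nat \<Rightarrow> nat \<Rightarrow> (nat \<Rightarrow> nat)" where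
  "ebs_add n x p s = x(p := (x p + s) mod n)"

definition ebs_sched :: "nat \<Rightarrow> nat \<Rightarrow> int \<Rightarrow> (nat \<Rightarrow> nat) \<Rightarrow> (nat \<Rightarrow> nat)" where
  "ebs_sched l n t x = (case ebs_ps l n t of (p, s) \<Rightarrow> ebs_add n x p s)"

definition ebs_diff :: "nat \<Rightarrow> (nat \<Rightarrow> nat) \<Rightarrow> (nat \<Rightarrow> nat) \<Rightarrow> nat \<Rightarrow> nat" where
  "ebs_diff n b x p = (b p + n - x p) mod n"

definition ebs_gchoice :: "nat \<Rightarrow> nat \<Rightarrow> (nat \<Rightarrow> nat) \<Rightarrow> (nat \<Rightarrow> nat) \<times> int \<Rightarrow> bool" where
  "ebs_gchoice l n b v = (case v of (x, t) \<Rightarrow>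
     (case ebs_ps l n t of (p, s) \<Rightarrow> ebs_diff n b x p = s))"

definition ebs_gstep :: "nat \<Rightarrow> nat \<Rightarrow> (nat \<Rightarrow> nat) \<Rightarrow> (nat \<Rightarrow> nat) \<times> int \<Rightarrow> (nat \<Rightarrow> nat) \<times> int" where
  "ebs_gstep l n b v = (case v of (x, t) \<Rightarrow>
     (if ebs_gchoice l n b (x, t) then (ebs_sched l n t x, t + 1) else (x, t + 1)))"

definition ebs_gstate :: "nat \<Rightarrow> nat \<Rightarrow> (nat \<Rightarrow> nat) \<Rightarrow> (nat \<Rightarrow> nat) \<Rightarrow> int \<Rightarrow> nat
    \<Rightarrow> (nat \<Rightarrow> nat) \<times> int" where
  "ebs_gstate l n b a t k = (ebs_gstep l n b ^^ k) (a, t)"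

definition ebs_semi_len :: "nat \<Rightarrow> nat \<Rightarrow> (nat \<Rightarrow> nat) \<Rightarrow> int \<Rightarrow> (nat \<Rightarrow> nat) \<Rightarrow> nat" where
  "ebs_semi_len l n a t b = (LEAST k. fst (ebs_gstate l n b a t k) = b)"

definition ebs_semi :: "nat \<Rightarrow> nat \<Rightarrow> (nat \<Rightarrow> nat) \<Rightarrow> int \<Rightarrow> (nat \<Rightarrow> nat) \<Rightarrow> bool list" where
  "ebs_semi l n a t b =
     map (\<lambda>k. ebs_gchoice l n b (ebs_gstate l n b a t k)) [0..<ebs_semi_len l n a t b]"

definition ebs_via :: "nat \<Rightarrow> nat \<Rightarrow> (nat \<Rightarrow> nat) \<Rightarrow> (nat \<Rightarrow> nat) \<Rightarrow> int \<Rightarrow> (nat \<Rightarrow> nat)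
    \<Rightarrow> (nat \<Rightarrow> nat) path" where
  "ebs_via l n a b t c =
     (a, t, ebs_semi l n a t c
            @ replicate (ebs_period l n - ebs_semi_len l n a t c) False
            @ ebs_semi l n c (t + int (ebs_period l n)) b)"

definition ebs_R :: "nat \<Rightarrow> nat \<Rightarrow> (nat \<Rightarrow> nat) \<Rightarrow> (nat \<Rightarrow> nat) \<Rightarrow> int \<Rightarrow> (nat \<Rightarrow> nat) path \<Rightarrow> real" where
  "ebs_R l n a b t P = real (card {c \<in> ebs_nodes l n. ebs_via l n a b t c = P}) / real (n ^ l)"

end

theory Submission
  imports Defs
begin

lemma walk_append: "walk sch x t (xs @ ys) = walk sch (walk sch x t xs) (t + int (length xs)) ys"
  by (induction xs arbitrary: x t) (auto simp: algebra_simps)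

lemma walk_repl: "walk sch x t (replicate m False) = x"
  by (induction m arbitrary: t) auto

lemma gstate_Suc: "ebs_gstate l n b a t (Suc k) = ebs_gstep l n b (ebs_gstate l n b a t k)"
  by (simp add: ebs_gstate_def)

lemma gstate_0: "ebs_gstate l n b a t 0 = (a, t)"
  by (simp add: ebs_gstate_def)

lemma gstate_snd: "snd (ebs_gstate l n b a t k) = t + int k"
  by (induction k) (auto simp: gstate_Suc gstate_0 ebs_gstep_def split: prod.splits)

lemma walk_gstate:
  "walk (ebs_sched l n) a t (map (\<lambda>k. ebs_gchoice l n b (ebs_gstate l n b a t k)) [0..<m])
   = fst (ebs_gstate l n b a t m)"
proof (induction m)
  case 0 then show ?case by (simp add: gstate_0)
next
  case (Suc m)
  obtain x s where xs: "ebs_gstate l n b a t m = (x, s)" by fastforce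
  have s: "s = t + int m" using gstate_snd[of l n b a t m] xs by simp
  show ?case using Suc xs s
    by (simp add: walk_append gstate_Suc ebs_gstep_def)
qed

lemma card_funset:
  fixes B :: "nat \<Rightarrow> nat set"
  assumes "\<And>q. finite (B q)"
  shows "finite {x. (\<forall>q<l. x q \<in> B q) \<and> (\<forall>q\<ge>l. x q = 0)}
     \<and> card {x. (\<forall>q<l. x q \<in> B q) \<and> (\<forall>q\<ge>l. x q = 0)} = (\<Prod>q<l. card (B q))"
proof -
  let ?S = "{x. (\<forall>q<l. x q \<in> B q) \<and> (\<forall>q\<ge>l. x q = 0)}"
  have bij: "bij_betw (\<lambda>x. restrict x {..<l}) ?S (PiE {..<l} B)"
  proof (rule bij_betw_byWitness[where f' = "\<lambda>f q. if q < l then f q else 0"])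
    show "\<forall>a\<in>?S. (\<lambda>q. if q < l then restrict a {..<l} q else 0) = a"
      by (auto simp: fun_eq_iff)
    show "\<forall>a'\<in>PiE {..<l} B. restrict (\<lambda>q. if q < l then a' q else 0) {..<l} = a'"
    proof
      fix a' assume a': "a' \<in> PiE {..<l} B"
      have "restrict (\<lambda>q. if q < l then a' q else 0) {..<l} = restrict a' {..<l}"
        by (rule restrict_ext) simp
      also have "\<dots> = a'" using a' by (rule PiE_restrict)
      finally show "restrict (\<lambda>q. if q < l then a' q else 0) {..<l} = a'" .
    qed
    show "(\<lambda>x. restrict x {..<l}) ` ?S \<subseteq> PiE {..<l} B"
    proof (rule image_subsetI)
      fix x assume "x \<in> ?S"
      then show "restrict x {..<l} \<in> PiE {..<l} B" by (simp add: Pi_def)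
    qed
    show "(\<lambda>f q. if q < l then f q else 0) ` PiE {..<l} B \<subseteq> ?S"
    proof (rule image_subsetI)
      fix f assume f: "f \<in> PiE {..<l} B"
      then show "(\<lambda>q. if q < l then f q else 0) \<in> ?S" by (simp add: PiE_mem)
    qed
  qed
  have fin: "finite (PiE {..<l} B)" using assms by (simp add: finite_PiE)
  show ?thesis using bij_betw_finite[OF bij] bij_betw_same_card[OF bij] fin card_PiE[of "{..<l}" B]
    by simp
qed

lemma reord1: "(\<Sum>q\<in>A\<times>B\<times>C\<times>E. g q) = (\<Sum>t\<in>C. \<Sum>ac\<in>A\<times>E. \<Sum>b\<in>B. g (fst ac, b, t, snd ac))"
proof -
  have "(\<Sum>t\<in>C. \<Sum>ac\<in>A\<times>E. \<Sum>b\<in>B. g (fst ac, b, t, snd ac))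
      = (\<Sum>t\<in>C. \<Sum>y\<in>(A\<times>E)\<times>B. g (fst (fst y), snd y, t, snd (fst y)))"
    by (simp add: sum.cartesian_product split_beta)
  also have "\<dots> = (\<Sum>x\<in>C\<times>((A\<times>E)\<times>B). g (fst (fst (snd x)), snd (snd x), fst x, snd (fst (snd x))))"
    by (simp add: sum.cartesian_product split_beta)
  also have "\<dots> = (\<Sum>q\<in>A\<times>B\<times>C\<times>E. g q)"
    by (rule sum.reindex_bij_betw, rule bij_betw_byWitness[where f'="\<lambda>(a,b,t,c). (t, (a, c), b)"]) auto
  finally show ?thesis ..
qed
lemma reord2: "(\<Sum>q\<in>A\<times>B\<times>C\<times>E. g q) = (\<Sum>t\<in>C. \<Sum>cb\<in>E\<times>B. \<Sum>a\<in>A. g (a, snd cb, t, fst cb))"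
proof -
  have "(\<Sum>t\<in>C. \<Sum>cb\<in>E\<times>B. \<Sum>a\<in>A. g (a, snd cb, t, fst cb))
      = (\<Sum>t\<in>C. \<Sum>y\<in>(E\<times>B)\<times>A. g (snd y, snd (fst y), t, fst (fst y)))"
    by (simp add: sum.cartesian_product split_beta)
  also have "\<dots> = (\<Sum>x\<in>C\<times>((E\<times>B)\<times>A). g (snd (snd x), snd (fst (snd x)), fst x, fst (fst (snd x))))"
    by (simp add: sum.cartesian_product split_beta)
  also have "\<dots> = (\<Sum>q\<in>A\<times>B\<times>C\<times>E. g q)"
    by (rule sum.reindex_bij_betw, rule bij_betw_byWitness[where f'="\<lambda>(a,b,t,c). (t, (c, b), a)"]) auto
  finally show ?thesis ..
qed

context
  fixes l n :: nat
  assumes l: "l \<ge> 1" and n: "n \<ge> 2"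
begin

lemma T_pos: "ebs_period l n > 0"
  using l n by (simp add: ebs_period_def)

lemma ps_range:
  assumes "ebs_ps l n t = (p, s)"
  shows "p < l \<and> 1 \<le> s \<and> s < n"
proof -
  define T where "T = ebs_period l n"
  have T: "T > 0" using T_pos T_def by simp
  define k where "k = nat (t mod int T)"
  have k: "k < T" using T unfolding k_def by (simp add: nat_less_iff)
  have ps: "p = k div (n - 1)" "s = k mod (n - 1) + 1"
    using assms unfolding ebs_ps_def k_def T_def Let_def by auto
  have "k < l * (n - 1)" using k T_def ebs_period_def by simp
  then have "p < l" using ps n by (simp add: less_mult_imp_div_less mult.commute)
  moreover have "s < n" using ps n by (metis Suc_eq_plus1 Suc_le_eq le_diff_iff' less_diff_conv mod_less_divisor one_le_numeral order.trans zero_less_diff Suc_1 le_add_diff_inverse2)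
  ultimately show ?thesis using ps by simp
qed

lemma ps_period: "ebs_ps l n (t + int (ebs_period l n)) = ebs_ps l n t"
  by (simp add: ebs_ps_def)

lemma ps_surj:
  assumes "q < l" "1 \<le> d" "d < n"
  shows "\<exists>j < ebs_period l n. ebs_ps l n (t + int j) = (q, d)"
proof -
  define T where "T = ebs_period l n"
  have T: "T > 0" using T_pos T_def by simp
  define m where "m = q * (n - 1) + (d - 1)"
  have "m < (q + 1) * (n - 1)" using assms n unfolding m_def by simp
  also have "\<dots> \<le> l * (n - 1)" using assms by (intro mult_right_mono) auto
  finally have mT: "m < T" unfolding T_def ebs_period_def .
  define j where "j = nat ((int m - t) mod int T)"
  have j: "j < T" using T unfolding j_def by (simp add: nat_less_iff)
  have "(t + int j) mod int T = (t + (int m - t) mod int T) mod int T"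
    using T unfolding j_def by simp
  also have "\<dots> = int m mod int T" by (simp add: mod_add_right_eq)
  also have "\<dots> = int m" using mT by simp
  finally have e: "(t + int j) mod int T = int m" .
  have e1: "d - 1 < n - 1" using assms by simp
  have n1: "n - 1 \<noteq> 0" using n by simp
  have "m div (n - 1) = q" unfolding m_def using e1 n1
    by (metis add.commute div_less div_mult_self1 add_0_right)
  moreover have "m mod (n - 1) = d - 1" unfolding m_def using e1 n1
    by (metis add.commute mod_less mod_mult_self1)
  ultimately have "m div (n - 1) = q" "m mod (n - 1) = d - 1" by auto
  then have "ebs_ps l n (t + int j) = (q, d)"
    using e assms unfolding ebs_ps_def T_def[symmetric] Let_def by simp
  then show ?thesis using j T_def by blast
qed

lemma node_lt: "x \<in> ebs_nodes l n \<Longrightarrow> x q < n"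
  using n unfolding ebs_nodes_def by (cases "q < l") auto

lemma diff_add: assumes "a \<in> ebs_nodes l n" "c \<in> ebs_nodes l n"
  shows "(a q + ebs_diff n c a q) mod n = c q"
proof -
  have "a q < n" "c q < n" using assms node_lt by auto
  then have "(a q + ebs_diff n c a q) mod n = (a q + (c q + n - a q)) mod n"
    unfolding ebs_diff_def by (simp add: mod_add_right_eq)
  also have "\<dots> = (c q + n) mod n" using \<open>a q < n\<close> by simp
  also have "\<dots> = c q" using \<open>c q < n\<close> by simp
  finally show ?thesis .
qed

lemma diff_zero: assumes "a \<in> ebs_nodes l n" "c \<in> ebs_nodes l n"
  shows "ebs_diff n c a q = 0 \<longleftrightarrow> a q = c q"
proof -
  have "a q < n" "c q < n" using assms node_lt by auto
  show ?thesis
  proof (cases "a q \<le> c q")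
    case True
    have e1: "c q + n - a q = (c q - a q) + n" using True by simp
    have e2: "((c q - a q) + n) mod n = c q - a q" using \<open>c q < n\<close> by simp
    have "(c q + n - a q) mod n = c q - a q" unfolding e1 e2 ..
    then show ?thesis unfolding ebs_diff_def using True by auto
  next
    case False
    then show ?thesis unfolding ebs_diff_def using \<open>a q < n\<close> by simp
  qed
qed

lemma diff_self: "ebs_diff n c x p = 0" if "x p = c p"
  using that unfolding ebs_diff_def by simp

lemma gstate_closed:
  assumes a: "a \<in> ebs_nodes l n" and c: "c \<in> ebs_nodes l n"
  shows "fst (ebs_gstate l n c a t k) = (\<lambda>q. if ebs_diff n c a q \<noteq> 0
      \<and> (\<exists>j<k. ebs_ps l n (t + int j) = (q, ebs_diff n c a q)) then c q else a q)"
proof (induction k)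
  case 0
  then show ?case by (auto simp: gstate_0)
next
  case (Suc k)
  define d where "d = ebs_diff n c a"
  define X where "X = fst (ebs_gstate l n c a t k)"
  have Xd: "X = (\<lambda>q. if d q \<noteq> 0 \<and> (\<exists>j<k. ebs_ps l n (t + int j) = (q, d q)) then c q else a q)"
    using Suc X_def d_def by simp
  have st: "ebs_gstate l n c a t k = (X, t + int k)"
    using gstate_snd[of l n c a t k] X_def by (metis prod.collapse)
  obtain p s where ps: "ebs_ps l n (t + int k) = (p, s)" by fastforce
  have prng: "p < l" "1 \<le> s" "s < n" using ps_range[OF ps] by auto
  have pass_Suc: "(\<exists>j<Suc k. ebs_ps l n (t + int j) = (q, d q)) \<longleftrightarrow>
      (\<exists>j<k. ebs_ps l n (t + int j) = (q, d q)) \<or> (p = q \<and> s = d q)" for q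
    using ps by (auto simp: less_Suc_eq)
  have step: "fst (ebs_gstate l n c a t (Suc k)) =
      (if ebs_diff n c X p = s then ebs_add n X p s else X)"
    using st ps by (simp add: gstate_Suc ebs_gstep_def ebs_gchoice_def ebs_sched_def)
  show ?case unfolding d_def[symmetric]
  proof (rule ext)
    fix q
    show "fst (ebs_gstate l n c a t (Suc k)) q =
      (if d q \<noteq> 0 \<and> (\<exists>j<Suc k. ebs_ps l n (t + int j) = (q, d q)) then c q else a q)"
    proof (cases "q = p")
      case False
      then show ?thesis using step pass_Suc[of q] Xd by (auto simp: ebs_add_def)
    next
      case True
      show ?thesis
      proof (cases "d p \<noteq> 0 \<and> (\<exists>j<k. ebs_ps l n (t + int j) = (p, d p))")
        case pass: True
        then have "X p = c p" using Xd by simp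
        then have "ebs_diff n c X p \<noteq> s" using diff_self[of X p c] prng by simp
        then show ?thesis using step pass True pass_Suc[of p] Xd by auto
      next
        case npass: False
        have Xp: "X p = a p" using Xd if_not_P[OF npass, of "c p" "a p"] by simp
        then have dX: "ebs_diff n c X p = d p" unfolding d_def ebs_diff_def by simp
        show ?thesis
        proof (cases "d p = s")
          case True
          have "ebs_add n X p s p = c p"
            using Xp True diff_add[OF a c, of p] unfolding d_def ebs_add_def by simp
          then show ?thesis using step dX True \<open>q = p\<close> prng pass_Suc[of p] by auto
        next
          case False
          have nn: "\<not> (d p \<noteq> 0 \<and> (\<exists>j<Suc k. ebs_ps l n (t + int j) = (p, d p)))"
            using npass pass_Suc[of p] False by auto
          have "fst (ebs_gstate l n c a t (Suc k)) p = a p" using step dX False Xp by simp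
          then show ?thesis using \<open>q = p\<close> by (simp only: if_not_P[OF nn])
        qed
      qed
    qed
  qed
qed

lemma gstate_T:
  assumes a: "a \<in> ebs_nodes l n" and c: "c \<in> ebs_nodes l n"
  shows "fst (ebs_gstate l n c a t (ebs_period l n)) = c"
proof -
  have "(if ebs_diff n c a q \<noteq> 0 \<and> (\<exists>j<ebs_period l n. ebs_ps l n (t + int j) = (q, ebs_diff n c a q))
        then c q else a q) = c q" for q
  proof (cases "ebs_diff n c a q = 0")
    case True then show ?thesis using diff_zero[OF a c] by simp
  next
    case False
    have "q < l"
    proof (rule ccontr)
      assume "\<not> q < l"
      then have "a q = 0" "c q = 0" using a c unfolding ebs_nodes_def by auto
      then show False using False diff_zero[OF a c] by simp
    qed
    moreover have "ebs_diff n c a q < n" unfolding ebs_diff_def using n by simp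
    ultimately obtain j where "j < ebs_period l n" "ebs_ps l n (t + int j) = (q, ebs_diff n c a q)"
      using ps_surj False by (metis less_one not_le)
    then show ?thesis using False by auto
  qed
  then show ?thesis using gstate_closed[OF a c] by auto
qed

lemma semi_len:
  assumes a: "a \<in> ebs_nodes l n" and c: "c \<in> ebs_nodes l n"
  shows "ebs_semi_len l n a t c \<le> ebs_period l n"
    "fst (ebs_gstate l n c a t (ebs_semi_len l n a t c)) = c"
  using gstate_T[OF a c, of t] unfolding ebs_semi_len_def
  by (auto intro: Least_le LeastI)

lemma walk_semi:
  assumes a: "a \<in> ebs_nodes l n" and c: "c \<in> ebs_nodes l n"
  shows "walk (ebs_sched l n) a t (ebs_semi l n a t c) = c"
  using semi_len[OF a c] walk_gstate unfolding ebs_semi_def by metis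

lemma length_semi: "length (ebs_semi l n a t c) = ebs_semi_len l n a t c"
  by (simp add: ebs_semi_def)

lemma via_simps:
  "fst (ebs_via l n a b t c) = a" "fst (snd (ebs_via l n a b t c)) = t"
  by (simp_all add: ebs_via_def)

lemma via_latency:
  assumes a: "a \<in> ebs_nodes l n" and b: "b \<in> ebs_nodes l n" and c: "c \<in> ebs_nodes l n"
  shows "latency (ebs_via l n a b t c) \<le> 2 * ebs_period l n"
  using semi_len(1)[OF a c, of t] semi_len(1)[OF c b, of "t + int (ebs_period l n)"]
  by (simp add: ebs_via_def latency_def length_semi)

lemma via_walk:
  assumes a: "a \<in> ebs_nodes l n" and b: "b \<in> ebs_nodes l n" and c: "c \<in> ebs_nodes l n"
  shows "ebs_via l n a b t c \<in> route_paths (ebs_sched l n) a b t"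
  using semi_len(1)[OF a c, of t]
  by (simp add: ebs_via_def route_paths_def walk_append walk_repl walk_semi[OF a c]
      walk_semi[OF c b] length_semi)

lemma semi_nth: "k < ebs_semi_len l n a t c \<Longrightarrow>
   ebs_semi l n a t c ! k = ebs_gchoice l n c (ebs_gstate l n c a t k)"
  by (simp add: ebs_semi_def)

lemma semi_take: "k \<le> ebs_semi_len l n a t c \<Longrightarrow>
   walk (ebs_sched l n) a t (take k (ebs_semi l n a t c)) = fst (ebs_gstate l n c a t k)"
  by (simp add: ebs_semi_def take_map walk_gstate min_def)

lemma via_uses:
  assumes a: "a \<in> ebs_nodes l n" and b: "b \<in> ebs_nodes l n" and c: "c \<in> ebs_nodes l n"
    and u: "uses_phys (ebs_sched l n) (ebs_via l n a b t c) (i, s)"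
  shows "(\<exists>k<ebs_period l n. t + int k = s \<and> fst (ebs_gstate l n c a t k) = i
            \<and> ebs_gchoice l n c (ebs_gstate l n c a t k))
       \<or> (\<exists>j<ebs_period l n. t + int (ebs_period l n) + int j = s
            \<and> fst (ebs_gstate l n b c (t + int (ebs_period l n)) j) = i
            \<and> ebs_gchoice l n b (ebs_gstate l n b c (t + int (ebs_period l n)) j))"
proof -
  define T where "T = ebs_period l n"
  define cs1 where "cs1 = ebs_semi l n a t c"
  define cs2 where "cs2 = ebs_semi l n c (t + int T) b"
  define L1 where "L1 = ebs_semi_len l n a t c"
  define L2 where "L2 = ebs_semi_len l n c (t + int T) b"
  have hL1: "L1 \<le> T" using semi_len(1)[OF a c] L1_def T_def by simp
  have hL2: "L2 \<le> T" using semi_len(1)[OF c b] L2_def T_def by simp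
  have len: "length cs1 = L1" "length cs2 = L2"
    by (simp_all add: cs1_def cs2_def L1_def L2_def length_semi)
  have via: "ebs_via l n a b t c = (a, t, cs1 @ replicate (T - L1) False @ cs2)"
    unfolding ebs_via_def cs1_def cs2_def L1_def T_def ..
  obtain k where k: "k < length (cs1 @ replicate (T - L1) False @ cs2)"
    "(cs1 @ replicate (T - L1) False @ cs2) ! k"
    "walk (ebs_sched l n) a t (take k (cs1 @ replicate (T - L1) False @ cs2)) = i"
    "t + int k = s"
    using u unfolding uses_phys_def via by auto
  show ?thesis
  proof (cases "k < L1")
    case True
    then have "cs1 ! k" "walk (ebs_sched l n) a t (take k cs1) = i"
      using k len by (simp_all add: nth_append)
    then have "ebs_gchoice l n c (ebs_gstate l n c a t k)" "fst (ebs_gstate l n c a t k) = i"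
      using True semi_nth semi_take[of k a t c] unfolding cs1_def L1_def by auto
    then show ?thesis using True hL1 k(4) T_def by auto
  next
    case False
    show ?thesis
    proof (cases "k < T")
      case True
      then have "\<not> (cs1 @ replicate (T - L1) False @ cs2) ! k"
        using False len hL1 by (auto simp: nth_append)
      then show ?thesis using k by simp
    next
      case kT: False
      define j where "j = k - T"
      have kj: "k = T + j" using kT j_def by simp
      have j: "j < L2" using k(1) len hL1 kj by simp
      have kk: "k = length cs1 + (length (replicate (T - L1) False) + j)" using len hL1 kj by simp
      have "cs2 ! j" using k(2) unfolding kk by (simp only: nth_append_length_plus append_assoc)
      moreover have "take k (cs1 @ replicate (T - L1) False @ cs2)
          = cs1 @ replicate (T - L1) False @ take j cs2"
        using len hL1 kj by simp
      then have "walk (ebs_sched l n) c (t + int T) (take j cs2) = i"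
        using k(3) len hL1 walk_semi[OF a c, of t]
        by (simp add: walk_append walk_repl cs1_def)
      ultimately have "ebs_gchoice l n b (ebs_gstate l n b c (t + int T) j)"
          "fst (ebs_gstate l n b c (t + int T) j) = i"
        using j semi_nth semi_take[of j c "t + int T" b] unfolding cs2_def L2_def by auto
      then show ?thesis using j hL2 k(4) kj T_def by auto
    qed
  qed
qed

lemma nodes_card: "finite (ebs_nodes l n) \<and> card (ebs_nodes l n) = n ^ l"
  using card_funset[where l=l and B="\<lambda>_. {..<n}"] unfolding ebs_nodes_def by simp

lemma recover: assumes a: "a \<in> ebs_nodes l n" and c: "c \<in> ebs_nodes l n"
  shows "a q = (c q + n - ebs_diff n c a q) mod n"
proof -
  have "a q < n" "c q < n" using a c node_lt by auto
  show ?thesis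
  proof (cases "a q \<le> c q")
    case True
    then have "(c q + n - a q) mod n = c q - a q"
      using \<open>c q < n\<close> by (metis add.commute add_diff_assoc2 mod_add_self1 mod_less le_diff_conv diff_less_mono2 le_less_trans diff_le_self)
    then show ?thesis using True \<open>a q < n\<close> \<open>c q < n\<close> by (simp add: ebs_diff_def)
  next
    case False
    then show ?thesis using \<open>a q < n\<close> \<open>c q < n\<close> by (simp add: ebs_diff_def)
  qed
qed

lemma diff_lt: "ebs_diff n c a q < n"
  unfolding ebs_diff_def using n by simp

lemma count_pairs:
  "card {(a, c). a \<in> ebs_nodes l n \<and> c \<in> ebs_nodes l n \<and> (\<exists>k. t + int k = s
      \<and> fst (ebs_gstate l n c a t k) = i \<and> ebs_gchoice l n c (ebs_gstate l n c a t k))} \<le> n ^ (l - 1)"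
proof -
  define S where "S = {(a, c). a \<in> ebs_nodes l n \<and> c \<in> ebs_nodes l n \<and> (\<exists>k. t + int k = s
      \<and> fst (ebs_gstate l n c a t k) = i \<and> ebs_gchoice l n c (ebs_gstate l n c a t k))}"
  obtain p \<sigma> where ps: "ebs_ps l n s = (p, \<sigma>)" by fastforce
  have prng: "p < l" "1 \<le> \<sigma>" "\<sigma> < n" using ps_range[OF ps] by auto
  define B where "B = (\<lambda>q. if q = p then {\<sigma>} else {..<n})"
  define W where "W = {x. (\<forall>q<l. x q \<in> B q) \<and> (\<forall>q\<ge>l. x q = 0)}"
  have W: "finite W" "card W = (\<Prod>q<l. card (B q))"
    using card_funset[where l=l and B=B] unfolding W_def B_def by auto
  have "(\<Prod>q<l. card (B q)) = card (B p) * (\<Prod>q\<in>{..<l} - {p}. card (B q))"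
    using prng by (intro prod.remove) auto
  also have "\<dots> = (\<Prod>q\<in>{..<l} - {p}. n)"
    unfolding B_def by (auto intro: prod.cong)
  also have "\<dots> = n ^ (l - 1)" using prng by simp
  finally have cardW: "card W = n ^ (l - 1)" using W by simp
  define g where "g = (\<lambda>(a::nat\<Rightarrow>nat, c::nat\<Rightarrow>nat). ebs_diff n c a)"
  have key: "ebs_diff n c a p = \<sigma> \<and> i = (\<lambda>q. if ebs_diff n c a q \<noteq> 0
      \<and> (\<exists>j<nat (s - t). ebs_ps l n (t + int j) = (q, ebs_diff n c a q)) then c q else a q)"
    if "(a, c) \<in> S" for a c
  proof -
    from that obtain k where a: "a \<in> ebs_nodes l n" and c: "c \<in> ebs_nodes l n"
      and k: "t + int k = s" "fst (ebs_gstate l n c a t k) = i" "ebs_gchoice l n c (ebs_gstate l n c a t k)"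
      unfolding S_def by auto
    have st: "ebs_gstate l n c a t k = (i, s)" using k(1,2) gstate_snd[of l n c a t k]
      by (metis prod.collapse)
    have ch: "ebs_diff n c i p = \<sigma>" using k(3) st ps by (simp add: ebs_gchoice_def)
    have kk: "nat (s - t) = k" using k(1) by simp
    have icl: "i = (\<lambda>q. if ebs_diff n c a q \<noteq> 0
      \<and> (\<exists>j<k. ebs_ps l n (t + int j) = (q, ebs_diff n c a q)) then c q else a q)"
      using gstate_closed[OF a c, of t k] k(2) by simp
    have "i p = a p"
    proof (rule ccontr)
      assume "i p \<noteq> a p"
      moreover have "i p = (if ebs_diff n c a p \<noteq> 0
        \<and> (\<exists>j<k. ebs_ps l n (t + int j) = (p, ebs_diff n c a p)) then c p else a p)"
        using fun_cong[OF icl, of p] by simp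
      ultimately have "i p = c p" by (auto split: if_splits)
      then show False using diff_self[of i p c] ch prng by simp
    qed
    then have "ebs_diff n c a p = \<sigma>" using ch unfolding ebs_diff_def by simp
    then show ?thesis using icl kk by simp
  qed
  have "g ` S \<subseteq> W"
  proof
    fix d assume "d \<in> g ` S"
    then obtain a c where ac: "(a, c) \<in> S" and d: "d = ebs_diff n c a" unfolding g_def by auto
    have a: "a \<in> ebs_nodes l n" and c: "c \<in> ebs_nodes l n" using ac unfolding S_def by auto
    have "d q = 0" if "q \<ge> l" for q
      using that a c diff_zero[OF a c, of q] d unfolding ebs_nodes_def by auto
    moreover have "d q \<in> B q" if "q < l" for q
      using key[OF ac] d diff_lt unfolding B_def by auto
    ultimately show "d \<in> W" unfolding W_def by auto
  qed
  moreover have "inj_on g S"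
  proof (rule inj_onI)
    fix x y assume x: "x \<in> S" and y: "y \<in> S" and gxy: "g x = g y"
    obtain a c where xac: "x = (a, c)" by fastforce
    obtain a' c' where yac: "y = (a', c')" by fastforce
    have a: "a \<in> ebs_nodes l n" and c: "c \<in> ebs_nodes l n" using x xac unfolding S_def by auto
    have a': "a' \<in> ebs_nodes l n" and c': "c' \<in> ebs_nodes l n" using y yac unfolding S_def by auto
    define d where "d = ebs_diff n c a"
    have dd: "ebs_diff n c' a' = d" using gxy xac yac unfolding g_def d_def by simp
    define P where "P = (\<lambda>q. d q \<noteq> 0 \<and> (\<exists>j<nat (s - t). ebs_ps l n (t + int j) = (q, d q)))"
    have i1: "i = (\<lambda>q. if P q then c q else a q)" using key[of a c] x xac unfolding P_def d_def by simp
    have i2: "i = (\<lambda>q. if P q then c' q else a' q)" using key[of a' c'] y yac dd unfolding P_def by simp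
    have "a q = a' q \<and> c q = c' q" for q
    proof (cases "P q")
      case True
      then have cc: "c q = c' q" using fun_cong[OF i1, of q] fun_cong[OF i2, of q] by simp
      then have "a q = a' q" using recover[OF a c, of q] recover[OF a' c', of q] dd d_def by simp
      then show ?thesis using cc by simp
    next
      case False
      then have aa: "a q = a' q" using fun_cong[OF i1, of q] fun_cong[OF i2, of q] by simp
      then have "c q = c' q" using diff_add[OF a c, of q] diff_add[OF a' c', of q] dd d_def by simp
      then show ?thesis using aa by simp
    qed
    then show "x = y" using xac yac by (simp add: fun_eq_iff)
  qed
  ultimately have "card S \<le> card W" using W(1) by (intro card_inj_on_le) auto
  then show ?thesis using cardW unfolding S_def by simp
qed

lemma sched_bij: "bij_betw (ebs_sched l n t) (ebs_nodes l n) (ebs_nodes l n)"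
proof -
  obtain p \<sigma> where ps: "ebs_ps l n t = (p, \<sigma>)" by fastforce
  have prng: "p < l" "1 \<le> \<sigma>" "\<sigma> < n" using ps_range[OF ps] by auto
  have sch: "ebs_sched l n t x = x(p := (x p + \<sigma>) mod n)" for x
    using ps by (simp add: ebs_sched_def ebs_add_def)
  have fin: "finite (ebs_nodes l n)" using nodes_card by simp
  have sub: "ebs_sched l n t ` ebs_nodes l n \<subseteq> ebs_nodes l n"
    using prng n unfolding sch ebs_nodes_def by auto
  have inj: "inj_on (ebs_sched l n t) (ebs_nodes l n)"
  proof (rule inj_onI)
    fix x y assume x: "x \<in> ebs_nodes l n" and y: "y \<in> ebs_nodes l n"
      and e: "ebs_sched l n t x = ebs_sched l n t y"
    have "(x p + \<sigma>) mod n = (y p + \<sigma>) mod n" using fun_cong[OF e, of p] unfolding sch by simp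
    have inv: "((z + \<sigma>) mod n + (n - \<sigma>)) mod n = z" if "z < n" for z
    proof -
      have "((z + \<sigma>) mod n + (n - \<sigma>)) mod n = (z + \<sigma> + (n - \<sigma>)) mod n" by (simp add: mod_add_left_eq)
      also have "z + \<sigma> + (n - \<sigma>) = z + n" using prng by simp
      finally show ?thesis using that by simp
    qed
    have "x p = y p" using inv[OF node_lt[OF x]] inv[OF node_lt[OF y]] \<open>(x p + \<sigma>) mod n = (y p + \<sigma>) mod n\<close>
      by metis
    moreover have "x q = y q" if "q \<noteq> p" for q using fun_cong[OF e, of q] that unfolding sch by simp
    ultimately show "x = y" by (metis ext)
  qed
  show ?thesis using endo_inj_surj[OF fin sub inj] inj by (simp add: bij_betw_def)
qed

lemma sched_period: "ebs_sched l n (t + int (ebs_period l n)) = ebs_sched l n t"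
  by (simp add: fun_eq_iff ebs_sched_def ps_period)

lemma gstate_period:
  "ebs_gstate l n b a (t + int (ebs_period l n)) k
    = (fst (ebs_gstate l n b a t k), snd (ebs_gstate l n b a t k) + int (ebs_period l n))"
proof (induction k)
  case 0 then show ?case by (simp add: gstate_0)
next
  case (Suc k)
  obtain x u where xu: "ebs_gstate l n b a t k = (x, u)" by fastforce
  show ?case using Suc xu
    by (simp add: gstate_Suc ebs_gstep_def ebs_gchoice_def ps_period sched_period
        add.commute add.left_commute del: of_nat_add)
qed

lemma semi_period:
  "ebs_semi_len l n a (t + int (ebs_period l n)) c = ebs_semi_len l n a t c"
  "ebs_semi l n a (t + int (ebs_period l n)) c = ebs_semi l n a t c"
proof -
  show L: "ebs_semi_len l n a (t + int (ebs_period l n)) c = ebs_semi_len l n a t c"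
    unfolding ebs_semi_len_def gstate_period by simp
  show "ebs_semi l n a (t + int (ebs_period l n)) c = ebs_semi l n a t c"
    unfolding ebs_semi_def L
    by (rule map_cong[OF refl]) (simp add: gstate_period ebs_gchoice_def ps_period split: prod.splits)
qed

lemma via_period:
  "ebs_via l n a b (t + int (ebs_period l n)) c = (a, t + int (ebs_period l n), snd (snd (ebs_via l n a b t c)))"
  unfolding ebs_via_def using semi_period[of a t c] semi_period[of c "t + int (ebs_period l n)" b] by simp

lemma sum_card_fibers:
  fixes f :: "'a \<Rightarrow> 'b"
  assumes "finite A"
  shows "(\<Sum>y\<in>f ` A. real (card {x \<in> A. f x = y})) = real (card A)"
  using sum_fun_comp[of A "f ` A" f "\<lambda>_. (1::real)"] assms by simp

lemma R_support:
  assumes "ebs_R l n a b t P \<noteq> 0"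
  shows "\<exists>c \<in> ebs_nodes l n. ebs_via l n a b t c = P"
  using assms unfolding ebs_R_def by (metis (mono_tags, lifting) Collect_empty_eq card.empty div_0 of_nat_0)

lemma R_sum:
  assumes a: "a \<in> ebs_nodes l n" and b: "b \<in> ebs_nodes l n"
  shows "(\<Sum>\<^sub>\<infinity>P\<in>route_paths (ebs_sched l n) a b t. ennreal (ebs_R l n a b t P)) = 1"
proof -
  define V where "V = ebs_nodes l n"
  define F where "F = ebs_via l n a b t ` V"
  have fin: "finite V" using nodes_card V_def by simp
  have Fsub: "F \<subseteq> route_paths (ebs_sched l n) a b t" using via_walk[OF a b] unfolding F_def V_def by auto
  have "(\<Sum>\<^sub>\<infinity>P\<in>route_paths (ebs_sched l n) a b t. ennreal (ebs_R l n a b t P))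
      = (\<Sum>\<^sub>\<infinity>P\<in>F. ennreal (ebs_R l n a b t P))"
  proof (rule infsum_cong_neutral)
    fix P assume "P \<in> route_paths (ebs_sched l n) a b t - F"
    then have "ebs_R l n a b t P = 0" using R_support unfolding F_def V_def by blast
    then show "ennreal (ebs_R l n a b t P) = 0" by simp
  qed (use Fsub in auto)
  also have "\<dots> = (\<Sum>P\<in>F. ennreal (ebs_R l n a b t P))" using fin F_def by simp
  also have "\<dots> = ennreal (\<Sum>P\<in>F. ebs_R l n a b t P)"
    by (rule sum_ennreal) (simp add: ebs_R_def)
  also have "(\<Sum>P\<in>F. ebs_R l n a b t P) = (\<Sum>P\<in>F. real (card {c \<in> V. ebs_via l n a b t c = P})) / real (n ^ l)"
    unfolding ebs_R_def V_def by (simp add: sum_divide_distrib)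
  also have "\<dots> = 1" unfolding F_def using sum_card_fibers[OF fin, of "ebs_via l n a b t"] nodes_card n V_def by simp
  finally show ?thesis by simp
qed

lemma R_period:
  "ebs_R l n a b (t + int (ebs_period l n)) (x, s + int (ebs_period l n), cs) = ebs_R l n a b t (x, s, cs)"
proof -
  have "ebs_via l n a b (t + int (ebs_period l n)) c = (x, s + int (ebs_period l n), cs)
     \<longleftrightarrow> ebs_via l n a b t c = (x, s, cs)" for c
    unfolding via_period by (cases "ebs_via l n a b t c") (auto simp: ebs_via_def)
  then show ?thesis unfolding ebs_R_def by simp
qed

lemma routing: "oblivious_routing_scheme (ebs_nodes l n) (ebs_period l n) (ebs_sched l n) (ebs_R l n)"
  unfolding oblivious_routing_scheme_def connection_schedule_def
proof (intro conjI allI ballI)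
  show "1 \<le> ebs_period l n" using T_pos by simp
next
  fix t show "bij_betw (ebs_sched l n t) (ebs_nodes l n) (ebs_nodes l n)" by (rule sched_bij)
next
  fix t show "ebs_sched l n (t + int (ebs_period l n)) = ebs_sched l n t" by (rule sched_period)
next
  fix a b t P show "0 \<le> ebs_R l n a b t P" by (simp add: ebs_R_def)
next
  fix a b t P assume a: "a \<in> ebs_nodes l n" and b: "b \<in> ebs_nodes l n"
  show "ebs_R l n a b t P \<noteq> 0 \<longrightarrow> P \<in> route_paths (ebs_sched l n) a b t"
    using R_support via_walk[OF a b] by blast
next
  fix a b t assume a: "a \<in> ebs_nodes l n" and b: "b \<in> ebs_nodes l n"
  show "(\<Sum>\<^sub>\<infinity>P\<in>route_paths (ebs_sched l n) a b t. ennreal (ebs_R l n a b t P)) = 1"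
    by (rule R_sum[OF a b])
next
  fix a b t x s cs
  show "ebs_R l n a b (t + int (ebs_period l n)) (x, s + int (ebs_period l n), cs) = ebs_R l n a b t (x, s, cs)"
    by (rule R_period)
qed

lemma latency_bound: "max_latency_le (ebs_nodes l n) (ebs_R l n) (2 * real l * (real n - 1))"
  unfolding max_latency_le_def
proof (intro ballI allI impI)
  fix a b t P assume a: "a \<in> ebs_nodes l n" and b: "b \<in> ebs_nodes l n" and R: "0 < ebs_R l n a b t P"
  have "ebs_R l n a b t P \<noteq> 0" using R by simp
  then obtain c where c: "c \<in> ebs_nodes l n" and P: "P = ebs_via l n a b t c"
    using R_support[of a b t P] by metis
  have "latency P \<le> 2 * ebs_period l n" using via_latency[OF a b c] P by simp
  then have "real (latency P) \<le> 2 * real (l * (n - 1))" unfolding ebs_period_def by linarith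
  also have "\<dots> = 2 * real l * (real n - 1)" using n by (simp add: of_nat_diff)
  finally show "real (latency P) \<le> 2 * real l * (real n - 1)" .
qed

lemma flow_eq:
  assumes Dnn: "\<forall>t. \<forall>a\<in>ebs_nodes l n. \<forall>b\<in>ebs_nodes l n. D t a b \<ge> 0"
    and x: "x \<in> ebs_nodes l n"
  shows "flow_of (ebs_nodes l n) (ebs_R l n) D (x, t0, cs)
    = ennreal (\<Sum>b\<in>ebs_nodes l n. D t0 x b * ebs_R l n x b t0 (x, t0, cs))"
proof -
  define V where "V = ebs_nodes l n"
  define P where "P = (x, t0, cs)"
  have fin: "finite V" using nodes_card V_def by simp
  define G where "G = (\<lambda>b::nat\<Rightarrow>nat. (x, b, t0))"
  have "flow_of V (ebs_R l n) D P = (\<Sum>\<^sub>\<infinity>(a, b, t)\<in>G ` V. ennreal (D t a b) * ennreal (ebs_R l n a b t P))"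
    unfolding flow_of_def
  proof (rule infsum_cong_neutral)
    fix q assume q: "q \<in> V \<times> V \<times> (UNIV :: int set) - G ` V"
    obtain a b t where qq: "q = (a, b, t)" by (cases q) auto
    have ab: "a \<in> V" "b \<in> V" using q qq by auto
    have "ebs_R l n a b t P = 0"
    proof (rule ccontr)
      assume "ebs_R l n a b t P \<noteq> 0"
      then obtain c where "ebs_via l n a b t c = P" using R_support[of a b t P] by metis
      then have "a = x" "t = t0" using via_simps[of a b t c] unfolding P_def by auto
      then show False using q qq ab unfolding G_def by auto
    qed
    then show "(case q of (a, b, t) \<Rightarrow> ennreal (D t a b) * ennreal (ebs_R l n a b t P)) = 0"
      using qq by simp
  qed (use x in \<open>auto simp: G_def V_def\<close>)
  also have "\<dots> = (\<Sum>q\<in>G ` V. (case q of (a, b, t) \<Rightarrow> ennreal (D t a b) * ennreal (ebs_R l n a b t P)))"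
    using fin by simp
  also have "\<dots> = (\<Sum>b\<in>V. ennreal (D t0 x b) * ennreal (ebs_R l n x b t0 P))"
    by (subst sum.reindex) (auto simp: G_def inj_on_def)
  also have "\<dots> = (\<Sum>b\<in>V. ennreal (D t0 x b * ebs_R l n x b t0 P))"
  proof (intro sum.cong refl)
    fix b assume b: "b \<in> V"
    have "D t0 x b \<ge> 0" using Dnn x b V_def by auto
    moreover have "ebs_R l n x b t0 P \<ge> 0" by (simp add: ebs_R_def)
    ultimately show "ennreal (D t0 x b) * ennreal (ebs_R l n x b t0 P) = ennreal (D t0 x b * ebs_R l n x b t0 P)"
      by (simp add: ennreal_mult)
  qed
  also have "\<dots> = ennreal (\<Sum>b\<in>V. D t0 x b * ebs_R l n x b t0 P)"
    using Dnn x unfolding V_def by (intro sum_ennreal) (simp add: ebs_R_def)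
  finally show ?thesis unfolding V_def P_def .
qed

lemma load_le:
  assumes D: "requests_at_most (ebs_nodes l n) D r" and i: "i \<in> ebs_nodes l n" and r0: "r \<ge> 0"
  shows "load (ebs_nodes l n) (ebs_sched l n) (flow_of (ebs_nodes l n) (ebs_R l n) D) (i, s)
     \<le> ennreal (2 * (r * real (ebs_period l n) * real n ^ (l - 1) / real n ^ l))"
proof -
  define V where "V = ebs_nodes l n"
  define T where "T = ebs_period l n"
  define N where "N = real n ^ l"
  have finV: "finite V" using nodes_card V_def by simp
  have Npos: "N > 0" using n N_def by simp
  have Dnn: "\<forall>t. \<forall>a\<in>V. \<forall>b\<in>V. D t a b \<ge> 0" using D V_def unfolding requests_at_most_def by auto
  have Drow: "\<And>t a. a \<in> V \<Longrightarrow> (\<Sum>b\<in>V. D t a b) \<le> r" using D V_def unfolding requests_at_most_def by auto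
  have Dcol: "\<And>t b. b \<in> V \<Longrightarrow> (\<Sum>a\<in>V. D t a b) \<le> r" using D V_def unfolding requests_at_most_def by auto
  define S where "S = {P. fst P \<in> V \<and> uses_phys (ebs_sched l n) P (i, s)}"
  define I where "I = {s - 2 * int T .. s}"
  define Q where "Q = V \<times> V \<times> I \<times> V"
  define vq where "vq = (\<lambda>(a, b, t, c). ebs_via l n a b t c)"
  define F where "F = vq ` Q"
  define w where "w = (\<lambda>(a::nat\<Rightarrow>nat, b::nat\<Rightarrow>nat, t::int, c::nat\<Rightarrow>nat). D t a b / N)"
  define h where "h = (\<lambda>P. \<Sum>b\<in>V. D (fst (snd P)) (fst P) b * ebs_R l n (fst P) b (fst (snd P)) P)"
  have finI: "finite I" unfolding I_def by simp
  have finQ: "finite Q" unfolding Q_def using finV finI by simp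
  have finF: "finite F" unfolding F_def using finQ by simp
  have wnn: "w q \<ge> 0" if "q \<in> Q" for q
    using that Dnn Npos unfolding w_def Q_def by auto
  have hnn: "h P \<ge> 0" if "fst P \<in> V" for P
    unfolding h_def using that Dnn by (intro sum_nonneg mult_nonneg_nonneg) (auto simp: ebs_R_def)
  have "load V (ebs_sched l n) (flow_of V (ebs_R l n) D) (i, s) = (\<Sum>\<^sub>\<infinity>P\<in>S. ennreal (h P))"
    unfolding load_def S_def[symmetric]
  proof (rule infsum_cong)
    fix P assume P: "P \<in> S"
    obtain x t0 cs where Pe: "P = (x, t0, cs)" by (cases P) auto
    have x: "x \<in> V" using P Pe S_def by simp
    show "flow_of V (ebs_R l n) D P = ennreal (h P)"
      unfolding Pe h_def V_def using flow_eq[of D x t0 cs] Dnn x V_def by simp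
  qed
  also have "\<dots> = (\<Sum>\<^sub>\<infinity>P\<in>S \<inter> F. ennreal (h P))"
  proof (rule infsum_cong_neutral)
    fix P assume P: "P \<in> S - S \<inter> F"
    obtain x t0 cs where Pe: "P = (x, t0, cs)" by (cases P) auto
    have x: "x \<in> V" and u: "uses_phys (ebs_sched l n) P (i, s)" using P Pe S_def by auto
    have "h P = 0"
    proof (rule ccontr)
      assume "h P \<noteq> 0"
      then obtain b where b: "b \<in> V" and nz: "D t0 x b * ebs_R l n x b t0 P \<noteq> 0"
        unfolding h_def Pe by (auto elim: sum.not_neutral_contains_not_neutral)
      then have "ebs_R l n x b t0 P \<noteq> 0" by auto
      then obtain c where c: "c \<in> V" and vc: "ebs_via l n x b t0 c = P"
        using R_support[of x b t0 P] V_def by metis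
      have "t0 \<in> I"
        using via_uses[of x b c t0 i s] x b c u vc V_def
        unfolding I_def T_def by auto
      then have "P \<in> F" unfolding F_def Q_def vq_def using x b c vc by force
      then show False using P by simp
    qed
    then show "ennreal (h P) = 0" by simp
  qed auto
  also have "\<dots> = (\<Sum>P\<in>S \<inter> F. ennreal (h P))"
    using finF by simp
  also have "\<dots> = ennreal (\<Sum>P\<in>S \<inter> F. h P)"
    by (rule sum_ennreal) (use hnn S_def in auto)
  finally have load_eq: "load V (ebs_sched l n) (flow_of V (ebs_R l n) D) (i, s) = ennreal (\<Sum>P\<in>S \<inter> F. h P)" .
  have h_eq: "h P = (\<Sum>q\<in>{q \<in> Q. vq q = P}. w q)" if P: "P \<in> F" for P
  proof -
    obtain x0 b0 t0 c0 where q0: "(x0, b0, t0, c0) \<in> Q" and P0: "P = ebs_via l n x0 b0 t0 c0"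
      using P unfolding F_def vq_def by auto
    have x0: "x0 \<in> V" and t0: "t0 \<in> I" using q0 Q_def by auto
    have fP: "fst P = x0" "fst (snd P) = t0" using P0 via_simps by auto
    define A where "A = (\<lambda>b. {c \<in> V. ebs_via l n x0 b t0 c = P})"
    define G where "G = (\<lambda>(b::nat\<Rightarrow>nat, c::nat\<Rightarrow>nat). (x0, b, t0, c))"
    have "h P = (\<Sum>b\<in>V. D t0 x0 b * (real (card (A b)) / N))"
      unfolding h_def fP A_def ebs_R_def N_def V_def by simp
    also have "\<dots> = (\<Sum>b\<in>V. \<Sum>c\<in>A b. D t0 x0 b / N)"
      by (intro sum.cong refl) simp
    also have "\<dots> = (\<Sum>bc\<in>Sigma V A. D t0 x0 (fst bc) / N)"
      using finV unfolding A_def by (subst sum.Sigma) (auto simp: split_beta)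
    also have "\<dots> = (\<Sum>q\<in>G ` Sigma V A. w q)"
      by (subst sum.reindex) (auto simp: inj_on_def G_def w_def split_beta)
    also have "G ` Sigma V A = {q \<in> Q. vq q = P}"
    proof
      show "G ` Sigma V A \<subseteq> {q \<in> Q. vq q = P}"
        using x0 t0 unfolding G_def A_def Q_def vq_def by auto
      show "{q \<in> Q. vq q = P} \<subseteq> G ` Sigma V A"
      proof
        fix q assume q: "q \<in> {q \<in> Q. vq q = P}"
        obtain a b t c where qe: "q = (a, b, t, c)" by (cases q) auto
        have vv: "ebs_via l n a b t c = P" using q qe vq_def by simp
        then have "a = x0" "t = t0" using fP via_simps[of a b t c] by auto
        then show "q \<in> G ` Sigma V A" using q qe vv unfolding G_def A_def Q_def by force
      qed
    qed
    finally show ?thesis .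
  qed
  define S' where "S' = {q \<in> Q. vq q \<in> S}"
  have "(\<Sum>P\<in>S \<inter> F. h P) = (\<Sum>P\<in>S \<inter> F. \<Sum>q\<in>{q. q \<in> S' \<and> vq q = P}. w q)"
    by (intro sum.cong refl) (auto simp: h_eq S'_def intro!: sum.cong)
  also have "\<dots> = (\<Sum>q\<in>S'. w q)"
    by (rule sum.group) (use finQ finF in \<open>auto simp: S'_def F_def\<close>)
  finally have sum5: "(\<Sum>P\<in>S \<inter> F. h P) = (\<Sum>q\<in>S'. w q)" .
  define U1 where "U1 = (\<lambda>a t c. \<exists>k<T. t + int k = s \<and> fst (ebs_gstate l n c a t k) = i
            \<and> ebs_gchoice l n c (ebs_gstate l n c a t k))"
  define U2 where "U2 = (\<lambda>c t b. \<exists>j<T. t + int T + int j = s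
            \<and> fst (ebs_gstate l n b c (t + int T) j) = i
            \<and> ebs_gchoice l n b (ebs_gstate l n b c (t + int T) j))"
  have "(\<Sum>q\<in>S'. w q) = (\<Sum>q\<in>Q. if vq q \<in> S then w q else 0)"
    unfolding S'_def using finQ by (simp add: sum.inter_filter)
  also have "\<dots> \<le> (\<Sum>q\<in>Q. (if U1 (fst q) (fst (snd (snd q))) (snd (snd (snd q))) then w q else 0)
                      + (if U2 (snd (snd (snd q))) (fst (snd (snd q))) (fst (snd q)) then w q else 0))"
  proof (rule sum_mono)
    fix q assume q: "q \<in> Q"
    obtain a b t c where qe: "q = (a, b, t, c)" by (cases q) auto
    have abc: "a \<in> V" "b \<in> V" "c \<in> V" using q qe Q_def by auto
    show "(if vq q \<in> S then w q else 0) \<le> (if U1 (fst q) (fst (snd (snd q))) (snd (snd (snd q))) then w q else 0)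
                      + (if U2 (snd (snd (snd q))) (fst (snd (snd q))) (fst (snd q)) then w q else 0)"
    proof (cases "vq q \<in> S")
      case True
      then have "uses_phys (ebs_sched l n) (ebs_via l n a b t c) (i, s)" using qe vq_def S_def by simp
      then have "U1 a t c \<or> U2 c t b" using via_uses[of a b c t i s] abc V_def unfolding U1_def U2_def T_def by blast
      then show ?thesis using qe wnn[OF q] by auto
    qed (use wnn[OF q] in auto)
  qed
  also have "\<dots> = (\<Sum>q\<in>Q. if U1 (fst q) (fst (snd (snd q))) (snd (snd (snd q))) then w q else 0)
                 + (\<Sum>q\<in>Q. if U2 (snd (snd (snd q))) (fst (snd (snd q))) (fst (snd q)) then w q else 0)"
    by (rule sum.distrib)
  also have "\<dots> \<le> r * real T * real n ^ (l - 1) / N + r * real T * real n ^ (l - 1) / N"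
  proof (rule add_mono)
    define C1 where "C1 = (\<lambda>t. s - int T < t \<and> t \<le> s)"
    have cnt: "real (card {ac \<in> V \<times> V. U1 (fst ac) t (snd ac)}) \<le> (if C1 t then real n ^ (l - 1) else 0)" for t
    proof (cases "C1 t")
      case True
      define BB where "BB = {(a, c). a \<in> ebs_nodes l n \<and> c \<in> ebs_nodes l n \<and> (\<exists>k. t + int k = s
      \<and> fst (ebs_gstate l n c a t k) = i \<and> ebs_gchoice l n c (ebs_gstate l n c a t k))}"
      have sub: "{ac \<in> V \<times> V. U1 (fst ac) t (snd ac)} \<subseteq> BB"
        unfolding U1_def V_def BB_def by auto
      have "BB \<subseteq> V \<times> V" unfolding BB_def V_def by auto
      then have finBB: "finite BB" using finV finite_subset by blast
      have "card {ac \<in> V \<times> V. U1 (fst ac) t (snd ac)} \<le> card BB" by (rule card_mono[OF finBB sub])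
      also have "card BB \<le> n ^ (l - 1)" unfolding BB_def by (rule count_pairs)
      finally have "card {ac \<in> V \<times> V. U1 (fst ac) t (snd ac)} \<le> n ^ (l - 1)" .
      then show ?thesis using True by (simp add: of_nat_power[symmetric] del: of_nat_power)
    next
      case False
      have e: "{ac \<in> V \<times> V. U1 (fst ac) t (snd ac)} = {}"
        using False unfolding U1_def C1_def by force
      show ?thesis unfolding e using False by simp
    qed
    have "(\<Sum>q\<in>Q. if U1 (fst q) (fst (snd (snd q))) (snd (snd (snd q))) then w q else 0)
        = (\<Sum>t\<in>I. \<Sum>ac\<in>V \<times> V. \<Sum>b\<in>V. if U1 (fst ac) t (snd ac) then D t (fst ac) b / N else 0)"
      unfolding Q_def by (subst reord1) (intro sum.cong refl, simp add: w_def)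
    also have "\<dots> \<le> (\<Sum>t\<in>I. \<Sum>ac\<in>V \<times> V. if U1 (fst ac) t (snd ac) then r / N else 0)"
    proof (intro sum_mono)
      fix t ac assume ac: "ac \<in> V \<times> V"
      have "(\<Sum>b\<in>V. if U1 (fst ac) t (snd ac) then D t (fst ac) b / N else 0)
          = (if U1 (fst ac) t (snd ac) then (\<Sum>b\<in>V. D t (fst ac) b) / N else 0)"
        by (simp add: sum_divide_distrib)
      also have "\<dots> \<le> (if U1 (fst ac) t (snd ac) then r / N else 0)"
        using Drow[of "fst ac" t] ac Npos by (auto intro: divide_right_mono)
      finally show "(\<Sum>b\<in>V. if U1 (fst ac) t (snd ac) then D t (fst ac) b / N else 0)
          \<le> (if U1 (fst ac) t (snd ac) then r / N else 0)" .
    qed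
    also have "\<dots> = (\<Sum>t\<in>I. real (card {ac \<in> V \<times> V. U1 (fst ac) t (snd ac)}) * (r / N))"
      using finV by (simp add: sum.inter_filter[symmetric])
    also have "\<dots> \<le> (\<Sum>t\<in>I. (if C1 t then real n ^ (l - 1) else 0) * (r / N))"
      using cnt r0 Npos by (intro sum_mono mult_right_mono) auto
    also have "\<dots> = (\<Sum>t\<in>I. if C1 t then real n ^ (l - 1) * (r / N) else 0)"
      by (intro sum.cong) auto
    also have "\<dots> = (\<Sum>t\<in>{t \<in> I. C1 t}. real n ^ (l - 1) * (r / N))"
      using finI by (rule sum.inter_filter[symmetric])
    also have "\<dots> = real (card {t \<in> I. C1 t}) * (real n ^ (l - 1) * (r / N))"
      by simp
    also have "{t \<in> I. C1 t} = {s - int T + 1 .. s}"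
      unfolding I_def C1_def by auto
    also have "real (card {s - int T + 1 .. s}) = real T" by simp
    finally show "(\<Sum>q\<in>Q. if U1 (fst q) (fst (snd (snd q))) (snd (snd (snd q))) then w q else 0)
        \<le> r * real T * real n ^ (l - 1) / N" by (simp add: field_simps)
  next
    define C2 where "C2 = (\<lambda>t. s - 2 * int T < t \<and> t \<le> s - int T)"
    have cnt: "real (card {ac \<in> V \<times> V. U2 (fst ac) t (snd ac)}) \<le> (if C2 t then real n ^ (l - 1) else 0)" for t
    proof (cases "C2 t")
      case True
      define BB where "BB = {(a, c). a \<in> ebs_nodes l n \<and> c \<in> ebs_nodes l n \<and> (\<exists>k. (t + int T) + int k = s
      \<and> fst (ebs_gstate l n c a (t + int T) k) = i \<and> ebs_gchoice l n c (ebs_gstate l n c a (t + int T) k))}"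
      have sub: "{ac \<in> V \<times> V. U2 (fst ac) t (snd ac)} \<subseteq> BB"
        unfolding U2_def V_def BB_def by auto
      have "BB \<subseteq> V \<times> V" unfolding BB_def V_def by auto
      then have finBB: "finite BB" using finV finite_subset by blast
      have "card {ac \<in> V \<times> V. U2 (fst ac) t (snd ac)} \<le> card BB" by (rule card_mono[OF finBB sub])
      also have "card BB \<le> n ^ (l - 1)" unfolding BB_def by (rule count_pairs)
      finally have "card {ac \<in> V \<times> V. U2 (fst ac) t (snd ac)} \<le> n ^ (l - 1)" .
      then show ?thesis using True by (simp add: of_nat_power[symmetric] del: of_nat_power)
    next
      case False
      have e: "{ac \<in> V \<times> V. U2 (fst ac) t (snd ac)} = {}"
        using False unfolding U2_def C2_def by force
      show ?thesis unfolding e using False by simp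
    qed
    have "(\<Sum>q\<in>Q. if U2 (snd (snd (snd q))) (fst (snd (snd q))) (fst (snd q)) then w q else 0)
        = (\<Sum>t\<in>I. \<Sum>ac\<in>V \<times> V. \<Sum>a\<in>V. if U2 (fst ac) t (snd ac) then D t a (snd ac) / N else 0)"
      unfolding Q_def by (subst reord2) (intro sum.cong refl, simp add: w_def)
    also have "\<dots> \<le> (\<Sum>t\<in>I. \<Sum>ac\<in>V \<times> V. if U2 (fst ac) t (snd ac) then r / N else 0)"
    proof (intro sum_mono)
      fix t ac assume ac: "ac \<in> V \<times> V"
      have "(\<Sum>a\<in>V. if U2 (fst ac) t (snd ac) then D t a (snd ac) / N else 0)
          = (if U2 (fst ac) t (snd ac) then (\<Sum>a\<in>V. D t a (snd ac)) / N else 0)"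
        by (simp add: sum_divide_distrib)
      also have "\<dots> \<le> (if U2 (fst ac) t (snd ac) then r / N else 0)"
        using Dcol[of "snd ac" t] ac Npos by (auto intro: divide_right_mono)
      finally show "(\<Sum>a\<in>V. if U2 (fst ac) t (snd ac) then D t a (snd ac) / N else 0)
          \<le> (if U2 (fst ac) t (snd ac) then r / N else 0)" .
    qed
    also have "\<dots> = (\<Sum>t\<in>I. real (card {ac \<in> V \<times> V. U2 (fst ac) t (snd ac)}) * (r / N))"
      using finV by (simp add: sum.inter_filter[symmetric])
    also have "\<dots> \<le> (\<Sum>t\<in>I. (if C2 t then real n ^ (l - 1) else 0) * (r / N))"
      using cnt r0 Npos by (intro sum_mono mult_right_mono) auto
    also have "\<dots> = (\<Sum>t\<in>I. if C2 t then real n ^ (l - 1) * (r / N) else 0)"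
      by (intro sum.cong) auto
    also have "\<dots> = (\<Sum>t\<in>{t \<in> I. C2 t}. real n ^ (l - 1) * (r / N))"
      using finI by (rule sum.inter_filter[symmetric])
    also have "\<dots> = real (card {t \<in> I. C2 t}) * (real n ^ (l - 1) * (r / N))"
      by simp
    also have "{t \<in> I. C2 t} = {s - 2 * int T + 1 .. s - int T}"
      unfolding I_def C2_def by auto
    also have "real (card {s - 2 * int T + 1 .. s - int T}) = real T" by simp
    finally show "(\<Sum>q\<in>Q. if U2 (snd (snd (snd q))) (fst (snd (snd q))) (fst (snd q)) then w q else 0)
        \<le> r * real T * real n ^ (l - 1) / N" by (simp add: field_simps)
  qed
  finally have "(\<Sum>P\<in>S \<inter> F. h P) \<le> 2 * (r * real T * real n ^ (l - 1) / N)" using sum5 by simp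
  then show ?thesis using load_eq unfolding V_def T_def N_def by (simp add: ennreal_leI)
qed

end

lemma throughput:
  assumes l: "l \<ge> 1" and n: "n \<ge> 2"
  shows "guarantees_throughput (ebs_nodes l n) (ebs_sched l n) (ebs_R l n) (1 / (2 * real l))"
  unfolding guarantees_throughput_def feasible_def
proof (intro allI impI ballI)
  fix D i s
  assume D: "requests_at_most (ebs_nodes l n) D (1 / (2 * real l))" and i: "i \<in> ebs_nodes l n"
  have le: "load (ebs_nodes l n) (ebs_sched l n) (flow_of (ebs_nodes l n) (ebs_R l n) D) (i, s)
     \<le> ennreal (2 * ((1 / (2 * real l)) * real (ebs_period l n) * real n ^ (l - 1) / real n ^ l))"
    by (rule load_le[OF l n D i]) simp
  have lpos: "real l > 0" using l by simp
  have "2 * ((1 / (2 * real l)) * real (ebs_period l n) * real n ^ (l - 1) / real n ^ l)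
      = (real n - 1) * real n ^ (l - 1) / real n ^ l"
    using lpos n unfolding ebs_period_def by (simp add: of_nat_diff field_simps)
  also have "\<dots> \<le> 1"
  proof -
    have "real n ^ l = real n * real n ^ (l - 1)" using l by (metis power_eq_if not_one_le_zero)
    moreover have "(real n - 1) * real n ^ (l - 1) \<le> real n * real n ^ (l - 1)"
      by (intro mult_right_mono) auto
    ultimately show ?thesis using n by simp
  qed
  finally show "load (ebs_nodes l n) (ebs_sched l n) (flow_of (ebs_nodes l n) (ebs_R l n) D) (i, s) \<le> 1"
    using le by (metis ennreal_leI ennreal_1 order_trans)
qed

theorem proposition4p1:
  fixes l n :: nat
  assumes "l \<ge> 1" and "n \<ge> 2"
  shows "oblivious_routing_scheme (ebs_nodes l n) (ebs_period l n) (ebs_sched l n) (ebs_R l n)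
    \<and> guarantees_throughput (ebs_nodes l n) (ebs_sched l n) (ebs_R l n) (1 / (2 * real l))
    \<and> max_latency_le (ebs_nodes l n) (ebs_R l n) (2 * real l * (real n - 1))
    \<and> (\<forall>r::real. r \<le> 1 / 2 \<and> real l = 1 / (2 * r) \<longrightarrow>
         guarantees_throughput (ebs_nodes l n) (ebs_sched l n) (ebs_R l n) r
       \<and> max_latency_le (ebs_nodes l n) (ebs_R l n) (1 / r * (real (n ^ l) powr (2 * r) - 1)))"
proof -
  have thr: "guarantees_throughput (ebs_nodes l n) (ebs_sched l n) (ebs_R l n) (1 / (2 * real l))"
    by (rule throughput[OF assms])
  have lat: "max_latency_le (ebs_nodes l n) (ebs_R l n) (2 * real l * (real n - 1))"
    by (rule latency_bound[OF assms])
  have rest: "guarantees_throughput (ebs_nodes l n) (ebs_sched l n) (ebs_R l n) r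
       \<and> max_latency_le (ebs_nodes l n) (ebs_R l n) (1 / r * (real (n ^ l) powr (2 * r) - 1))"
    if hr: "r \<le> 1 / 2 \<and> real l = 1 / (2 * r)" for r :: real
  proof -
    have lpos: "real l > 0" using assms by simp
    have "r \<noteq> 0" using hr lpos by auto
    then have "r * (2 * real l) = 1" using hr by (auto simp: field_simps)
    then have r: "r = 1 / (2 * real l)" using lpos by (simp add: eq_divide_eq)
    have npos: "real n > 0" using assms by simp
    have "real (n ^ l) powr (2 * r) = (real n powr real l) powr (1 / real l)"
      using r npos by (simp add: powr_realpow)
    also have "\<dots> = real n" using lpos npos by (simp add: powr_powr)
    finally have pw: "real (n ^ l) powr (2 * r) = real n" .
    have eq: "1 / r * (real (n ^ l) powr (2 * r) - 1) = 2 * real l * (real n - 1)"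
      unfolding pw using r by simp
    show ?thesis
    proof
      show "guarantees_throughput (ebs_nodes l n) (ebs_sched l n) (ebs_R l n) r" using thr r by simp
      show "max_latency_le (ebs_nodes l n) (ebs_R l n) (1 / r * (real (n ^ l) powr (2 * r) - 1))"
        unfolding eq by (rule lat)
    qed
  qed
  show ?thesis using routing[OF assms] thr lat rest by blast
qed

end
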